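(* Let $X$ be a binary $N\times t$ matrix that is 3-good, let $S\subseteq[t]$ with $|S|=3$, let $\mathbf{y}=r(X,S)$ and $H=H(X,3,\mathbf{y})=([t],E)$. Let $L_1=\log_2\log_2 t$, $L_2=3L_1$, and let $G'=([t],E')$ be the graph in which distinct vertices $v_1,v_2$ are adjacent iff there are at least $L_2$ hyperedges $e\in E$ with $v_1\in e$ and $v_2\in e$. Then every vertex of $G'$ has degree less than $L_1$.
   Context: For a binary $N\times t$ matrix $X$ with columns $x(1),\dots,x(t)$ and $S\subseteq[t]$, $r(X,S)=\bigvee_{j\in S}x(j)$ (coordinatewise Boolean OR). For $\mathbf{y}\in\{0,1\}^N$, $H(X,3,\mathbf{y})$ is the $3$-uniform hypergraph on $[t]$ whose hyperedges are all $3$-element $S\subseteq[t]$ with $r(X,S)=\mathbf{y}$. A $(3,k)$ configuration of size $L$ is a set of $L$ hyperedges $e_1,\dots,e_L$ with a set $U$, $|U|=k$, such that $e_i\cap e_j=U$ for all $i\ne j$. Fix $p\in(0,1)$; $\Pr_1(s,w)$ is the probability that the OR of $s$ independent uniformly random length-$N$ binary columns of weight $\lfloor pN\rfloor$ equals a fixed vector of weight $w$; $\Pr_2(s,w_1,w)$ is the probability that the OR of $s$ such columns together with a fixed column $\mathbf{y}_1$ of weight $w_1$ equals a fixed vector $\mathbf{y}$ of weight $w$ with $\mathbf{y}\vee\mathbf{y}_1=\mathbf{y}$. With $L_1=\log_2\log_2 t$, $X$ is 3-good if: (1) for every $\mathbf{y}$, $H(X,3,\mathbf{y})$ has no $(3,1)$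 configuration of size $L_1$; (2) for every $\mathbf{y}$ with $|\mathbf{y}|=w$, $H(X,3,\mathbf{y})$ has no $(3,0)$ configuration of size $10\max(t^3\Pr_1(3,w),N)$; (3) for all $\mathbf{y},\mathbf{y}_1$ with $\mathbf{y}\vee\mathbf{y}_1=\mathbf{y}$, $|\mathbf{y}_1|=w_1$, $|\mathbf{y}|=w$, the number of $j$ with $\mathbf{y}_1\vee x(j)=\mathbf{y}$ is less than $10B(N,t)$, where $B(N,t)=t\Pr_2(1,w_1,w)$ if this exceeds $N$, $B(N,t)=N$ if $t^{-1/\sqrt{L_1}}\le t\Pr_2(1,w_1,w)\le N$, and $B(N,t)=L_1/10$ if $t\Pr_2(1,w_1,w)<t^{-1/\sqrt{L_1}}$; (4) for every $\mathbf{y}$ with $|\mathbf{y}|=w$ and integer $w_1\le w$, the number of pairwise disjoint pairs $\{j_1,j_2\}\subseteq[t]$ with $x(j_1)\vee x(j_2)\vee\mathbf{y}=\mathbf{y}$ and $|x(j_1)\vee x(j_2)|=w_1$ is less than $10\max(N,\binom{w}{w_1}t^2\Pr_1(2,w_1))$. *)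

theory Defs
  imports Complex_Main "HOL-Library.FuncSet"
begin

text \<open>A binary N x t matrix X is represented by its columns: X j is the support
(set of rows with entry 1) of column j, a subset of {0..<N}, for j < t.
Binary vectors of length N are subsets of {0..<N}; Boolean OR is union,
weight is card.  The column index set [t] is rendered as {0..<t}.\<close>

definition rOR :: "(nat \<Rightarrow> nat set) \<Rightarrow> nat set \<Rightarrow> nat set" where
  "rOR X S = (\<Union>j\<in>S. X j)"

definition hyperedges :: "(nat \<Rightarrow> nat set) \<Rightarrow> nat \<Rightarrow> nat set \<Rightarrow> nat set set" where
  "hyperedges X t y = {S. S \<subseteq> {0..<t} \<and> card S = 3 \<and> rOR X S = y}"

definition is_config :: "nat set set \<Rightarrow> nat \<Rightarrow> nat set set \<Rightarrow> bool" where
  "is_config E k F \<longleftrightarrow> F \<subseteq> E \<and> finite F \<and>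
     (\<exists>U. card U = k \<and> (\<forall>e\<in>F. U \<subseteq> e) \<and>
          (\<forall>e\<in>F. \<forall>e'\<in>F. e \<noteq> e' \<longrightarrow> e \<inter> e' = U))"

definition colw :: "real \<Rightarrow> nat \<Rightarrow> nat" where
  "colw p N = nat \<lfloor>p * real N\<rfloor>"

text \<open>Pr_1(s,w): probability that the OR of s independent uniform weight-colw columns
equals the fixed vector {0..<w} of weight w.\<close>
definition Pr1 :: "real \<Rightarrow> nat \<Rightarrow> nat \<Rightarrow> nat \<Rightarrow> real" where
  "Pr1 p N s w =
     real (card {f \<in> {0..<s} \<rightarrow>\<^sub>E {A. A \<subseteq> {0..<N} \<and> card A = colw p N}.
                   (\<Union>i\<in>{0..<s}. f i) = {0..<w}})
     / real (N choose colw p N) ^ s"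

text \<open>Pr_2(s,w1,w): same, with the fixed column y1 = {0..<w1} (weight w1) added,
target y = {0..<w} (weight w).\<close>
definition Pr2 :: "real \<Rightarrow> nat \<Rightarrow> nat \<Rightarrow> nat \<Rightarrow> nat \<Rightarrow> real" where
  "Pr2 p N s w1 w =
     real (card {f \<in> {0..<s} \<rightarrow>\<^sub>E {A. A \<subseteq> {0..<N} \<and> card A = colw p N}.
                   {0..<w1} \<union> (\<Union>i\<in>{0..<s}. f i) = {0..<w}})
     / real (N choose colw p N) ^ s"

definition L1 :: "nat \<Rightarrow> real" where
  "L1 t = log 2 (log 2 (real t))"

definition Bfun :: "real \<Rightarrow> nat \<Rightarrow> nat \<Rightarrow> nat \<Rightarrow> nat \<Rightarrow> real" where
  "Bfun p N t w1 w =
     (let v = real t * Pr2 p N 1 w1 w in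
      if v > real N then v
      else if real t powr (- 1 / sqrt (L1 t)) \<le> v then real N
      else L1 t / 10)"

definition good3 :: "real \<Rightarrow> nat \<Rightarrow> nat \<Rightarrow> (nat \<Rightarrow> nat set) \<Rightarrow> bool" where
  "good3 p N t X \<longleftrightarrow>
    (\<forall>y. y \<subseteq> {0..<N} \<longrightarrow>
        \<not> (\<exists>F. is_config (hyperedges X t y) 1 F \<and> real (card F) \<ge> L1 t)) \<and>
    (\<forall>y. y \<subseteq> {0..<N} \<longrightarrow>
        \<not> (\<exists>F. is_config (hyperedges X t y) 0 F \<and>
              real (card F) \<ge> 10 * max (real t ^ 3 * Pr1 p N 3 (card y)) (real N))) \<and>
    (\<forall>y y1. y \<subseteq> {0..<N} \<longrightarrow> y1 \<subseteq> {0..<N} \<longrightarrow> y \<union> y1 = y \<longrightarrow>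
        real (card {j \<in> {0..<t}. y1 \<union> X j = y}) < 10 * Bfun p N t (card y1) (card y)) \<and>
    (\<forall>y w1 P. y \<subseteq> {0..<N} \<longrightarrow> w1 \<le> card y \<longrightarrow>
        P \<subseteq> {{j1, j2} | j1 j2. j1 < t \<and> j2 < t \<and> j1 \<noteq> j2 \<and>
                 X j1 \<union> X j2 \<union> y = y \<and> card (X j1 \<union> X j2) = w1} \<longrightarrow>
        (\<forall>a\<in>P. \<forall>b\<in>P. a \<noteq> b \<longrightarrow> a \<inter> b = {}) \<longrightarrow>
        real (card P) < 10 * max (real N)
            (real (card y choose w1) * real t ^ 2 * Pr1 p N 2 w1))"

end

theory Submission
  imports Defs
begin

lemma greedy_step:
  fixes E :: "nat set set" and M :: "nat set" and v :: nat and L :: real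
  assumes finE: "finite E" and c3: "\<forall>e\<in>E. card e = 3" and finM: "finite M"
    and vM: "v \<notin> M"
    and big: "\<forall>u\<in>M. real (card {e\<in>E. v\<in>e \<and> u\<in>e}) \<ge> 3*L"
    and mL: "card M > 0 \<Longrightarrow> real (card M) < L + 1"
  shows "k \<le> card M \<Longrightarrow> \<exists>B F. B \<subseteq> M \<and> card B = k \<and> F \<subseteq> E \<and> card F = k \<and> finite F \<and>
        (\<forall>e\<in>F. v\<in>e) \<and> (\<forall>e\<in>F. \<forall>e'\<in>F. e\<noteq>e' \<longrightarrow> e\<inter>e' = {v}) \<and>
        \<Union>F \<inter> M = B \<and> card (\<Union>F - M - {v}) \<le> k"
proof (induction k)
  case 0
  show ?case by (rule exI[of _ "{}"], rule exI[of _ "{}"]) auto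
next
  case (Suc k)
  then obtain B F where B: "B \<subseteq> M" "card B = k" and F: "F \<subseteq> E" "card F = k" "finite F"
    "\<forall>e\<in>F. v\<in>e" "\<forall>e\<in>F. \<forall>e'\<in>F. e\<noteq>e' \<longrightarrow> e\<inter>e' = {v}" "\<Union>F \<inter> M = B"
    "card (\<Union>F - M - {v}) \<le> k" by auto
  have "card B < card M" using B Suc.prems by simp
  then obtain u where u: "u \<in> M" "u \<notin> B"
    by (metis B(1) psubsetI psubset_card_mono finM less_irrefl subsetI subset_antisym)
  have uF: "u \<notin> \<Union>F" using u F(6) by auto
  have finU: "finite (\<Union>F)"
  proof (rule finite_Union)
    show "finite F" using F by simp
    show "\<And>e. e \<in> F \<Longrightarrow> finite e" using F(1) c3 by (metis card.infinite subsetD zero_neq_numeral)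
  qed
  define Z where "Z = (\<Union>F - M - {v}) \<union> (M - {u})"
  have finZ: "finite Z" unfolding Z_def using finU finM by auto
  have cZ: "card Z \<le> k + (card M - 1)"
  proof -
    have "card Z \<le> card (\<Union>F - M - {v}) + card (M - {u})" unfolding Z_def by (rule card_Un_le)
    also have "card (M - {u}) = card M - 1" using u finM by simp
    finally show ?thesis using F(7) by linarith
  qed
  define Eu where "Eu = {e\<in>E. v\<in>e \<and> u\<in>e}"
  have finEu: "finite Eu" unfolding Eu_def using finE by auto
  have bad_sub: "{e\<in>Eu. e \<inter> Z \<noteq> {}} \<subseteq> (\<Union>z\<in>Z. {e\<in>Eu. z\<in>e})" by auto
  have one: "card {e\<in>Eu. z\<in>e} \<le> 1" if "z \<in> Z" for z
  proof -
    have zne: "z \<noteq> v" "z \<noteq> u"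
    proof -
      have zz: "z \<in> (\<Union>F - M - {v}) \<or> z \<in> M - {u}" using that unfolding Z_def by simp
      show "z \<noteq> v" using zz vM by auto
      show "z \<noteq> u" using zz u(1) by auto
    qed
    have uv: "u \<noteq> v" using u vM by auto
    have "{e\<in>Eu. z\<in>e} \<subseteq> {{v,u,z}}"
    proof
      fix e assume e: "e \<in> {e\<in>Eu. z\<in>e}"
      then have "card e = 3" "{v,u,z} \<subseteq> e" "finite e" using c3 unfolding Eu_def
        by (auto intro: card_ge_0_finite)
      moreover have "card {v,u,z} = 3" using zne uv by auto
      ultimately have "e = {v,u,z}" by (metis card_subset_eq)
      then show "e \<in> {{v,u,z}}" by simp
    qed
    then have "card {e\<in>Eu. z\<in>e} \<le> card {{v,u,z}}" by (intro card_mono) auto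
    then show ?thesis by simp
  qed
  have "card {e\<in>Eu. e \<inter> Z \<noteq> {}} \<le> card (\<Union>z\<in>Z. {e\<in>Eu. z\<in>e})"
    using finZ finEu bad_sub by (intro card_mono) auto
  also have "\<dots> \<le> (\<Sum>z\<in>Z. card {e\<in>Eu. z\<in>e})" by (rule card_UN_le[OF finZ])
  also have "\<dots> \<le> (\<Sum>z\<in>Z. 1)" by (rule sum_mono) (use one in auto)
  finally have cb: "card {e\<in>Eu. e \<inter> Z \<noteq> {}} \<le> card Z" by simp
  have kM: "k + 1 \<le> card M" using Suc.prems by simp
  have mpos: "card M > 0" using kM by simp
  have rM: "real (card M) < L + 1" using mL[OF mpos] .
  have "card Z + 2 \<le> 2 * card M" using cZ kM by linarith
  then have "real (card Z + 2) \<le> real (2 * card M)" by (rule of_nat_mono)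
  then have "real (card Z) + 2 \<le> 2 * real (card M)" by simp
  then have "real (card Z) < 3 * L" using rM kM by linarith
  also have "\<dots> \<le> real (card Eu)" using big u unfolding Eu_def by auto
  finally have "card {e\<in>Eu. e \<inter> Z \<noteq> {}} < card Eu" using cb by linarith
  then have "{e\<in>Eu. e \<inter> Z \<noteq> {}} \<noteq> Eu" by (metis less_irrefl)
  then obtain e where e: "e \<in> Eu" "e \<inter> Z = {}" by blast
  have eE: "e \<in> E" "v \<in> e" "u \<in> e" "card e = 3" using e c3 unfolding Eu_def by auto
  have uv: "u \<noteq> v" using u vM by auto
  have efin: "finite e" using eE(4) by (auto intro: card_ge_0_finite)
  have eUF: "e \<inter> \<Union>F \<subseteq> {v}"
  proof
    fix x assume x: "x \<in> e \<inter> \<Union>F"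
    show "x \<in> {v}"
    proof (rule ccontr)
      assume "x \<notin> {v}"
      then have "x \<noteq> u" "x \<noteq> v" using x uF by auto
      then have "x \<in> Z" using x unfolding Z_def by auto
      then show False using e x by auto
    qed
  qed
  have eF: "e \<notin> F" using eE uF by auto
  have erest: "card (e - M - {v}) \<le> 1"
  proof -
    have "e - M - {v} \<subseteq> e - {v,u}" using u by auto
    moreover have "card (e - {v,u}) = 1" using eE uv efin by (simp add: card_Diff_subset)
    ultimately show ?thesis using efin by (metis card_mono finite_Diff)
  qed
  show ?case
  proof (intro exI[of _ "insert u B"] exI[of _ "insert e F"] conjI)
    show "insert u B \<subseteq> M" using u B by auto
    show "card (insert u B) = Suc k" using u B finM by (metis card_insert_disjoint finite_subset)
    show "insert e F \<subseteq> E" using F eE by auto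
    show "card (insert e F) = Suc k" using F eF by simp
    show "finite (insert e F)" using F by simp
    show "\<forall>x\<in>insert e F. v \<in> x" using F eE by auto
    show "\<forall>x\<in>insert e F. \<forall>y\<in>insert e F. x \<noteq> y \<longrightarrow> x \<inter> y = {v}"
    proof (intro ballI impI)
      fix x y assume xy: "x \<in> insert e F" "y \<in> insert e F" "x \<noteq> y"
      have A: "e \<inter> y = {v}" if "y \<in> F" for y
        using eUF that F(4) eE(2) by blast
      show "x \<inter> y = {v}"
      proof (cases "x = e")
        case True
        then have "y \<in> F" using xy by auto
        then show ?thesis using A True by simp
      next
        case False
        then have xF: "x \<in> F" using xy by auto
        show ?thesis
        proof (cases "y = e")
          case True
          then show ?thesis using A[OF xF] by (simp add: Int_commute)
        next
          case False
          then have "y \<in> F" using xy by auto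
          then show ?thesis using F(5) xF xy(3) by blast
        qed
      qed
    qed
    show "\<Union>(insert e F) \<inter> M = insert u B"
    proof -
      have "e \<inter> M \<subseteq> {u}" using e(2) unfolding Z_def by blast
      then have eM: "e \<inter> M = {u}" using eE(3) u(1) by blast
      have "\<Union>(insert e F) \<inter> M = (e \<inter> M) \<union> (\<Union>F \<inter> M)" by blast
      then show ?thesis using F(6) eM by simp
    qed
    show "card (\<Union>(insert e F) - M - {v}) \<le> Suc k"
    proof -
      have "\<Union>(insert e F) - M - {v} = (e - M - {v}) \<union> (\<Union>F - M - {v})" by auto
      then have "card (\<Union>(insert e F) - M - {v}) \<le> card (e - M - {v}) + card (\<Union>F - M - {v})"
        by (metis card_Un_le)
      then show ?thesis using erest F(7) by linarith
    qed
  qed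
qed

theorem lemma3:
  fixes p :: real and N t :: nat and X :: "nat \<Rightarrow> nat set" and S :: "nat set"
  assumes "0 < p" "p < 1"
    and "\<forall>j<t. X j \<subseteq> {0..<N}"
    and "good3 p N t X"
    and "S \<subseteq> {0..<t}" "card S = 3"
  shows "\<forall>v1\<in>{0..<t}.
           real (card {v2 \<in> {0..<t}. v2 \<noteq> v1 \<and>
              real (card {e \<in> hyperedges X t (rOR X S). v1 \<in> e \<and> v2 \<in> e}) \<ge> 3 * L1 t})
           < L1 t"
proof
  fix v assume v: "v \<in> {0..<t}"
  define E where "E = hyperedges X t (rOR X S)"
  define Nb where "Nb = {v2 \<in> {0..<t}. v2 \<noteq> v \<and> real (card {e \<in> E. v \<in> e \<and> v2 \<in> e}) \<ge> 3 * L1 t}"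
  show "real (card {v2 \<in> {0..<t}. v2 \<noteq> v \<and>
              real (card {e \<in> hyperedges X t (rOR X S). v \<in> e \<and> v2 \<in> e}) \<ge> 3 * L1 t}) < L1 t"
  proof (rule ccontr)
    assume "\<not> ?thesis"
    then have NbL: "real (card Nb) \<ge> L1 t" unfolding Nb_def E_def by simp
    define m where "m = nat \<lceil>L1 t\<rceil>"
    have "m \<le> card Nb" unfolding m_def using NbL by linarith
    then obtain M where M: "M \<subseteq> Nb" "card M = m" using obtain_subset_with_card_n by metis
    have finNb: "finite Nb" unfolding Nb_def by auto
    have finM: "finite M" using M finNb finite_subset by auto
    have finE: "finite E" unfolding E_def hyperedges_def
      by (rule finite_subset[of _ "Pow {0..<t}"]) auto
    have c3: "\<forall>e\<in>E. card e = 3" unfolding E_def hyperedges_def by auto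
    have vM: "v \<notin> M" using M unfolding Nb_def by auto
    have big: "\<forall>u\<in>M. real (card {e\<in>E. v\<in>e \<and> u\<in>e}) \<ge> 3 * L1 t" using M unfolding Nb_def by auto
    have mL: "card M > 0 \<Longrightarrow> real (card M) < L1 t + 1" using M unfolding m_def by linarith
    obtain B F where F: "F \<subseteq> E" "card F = m" "finite F" "\<forall>e\<in>F. v\<in>e"
      "\<forall>e\<in>F. \<forall>e'\<in>F. e\<noteq>e' \<longrightarrow> e\<inter>e' = {v}"
      using greedy_step[OF finE c3 finM vM big mL, of m] M by auto
    have cfg: "is_config E 1 F" unfolding is_config_def
      using F by (intro conjI exI[of _ "{v}"]) auto
    have "real (card F) \<ge> L1 t" using F(2) unfolding m_def by linarith
    moreover have "rOR X S \<subseteq> {0..<N}" unfolding rOR_def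
    proof (rule UN_least)
      fix j assume "j \<in> S"
      then have "j < t" using assms(5) by auto
      then show "X j \<subseteq> {0..<N}" using assms(3) by blast
    qed
    moreover have g1: "\<forall>y. y \<subseteq> {0..<N} \<longrightarrow>
        \<not> (\<exists>F. is_config (hyperedges X t y) 1 F \<and> real (card F) \<ge> L1 t)"
      using assms(4) unfolding good3_def by (rule conjunct1)
    ultimately show False using cfg unfolding E_def by blast
  qed
qed

end
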